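(* Assume in addition that $\lambda_A>0$ (the dataset need not be balanced). Let $J=\frac{4\gamma^2}{N\lambda_A}$, $\alpha=\frac1{8+J}$, and let $M$ be a positive integer with $M\ge \frac{2}{\lambda_A\alpha}$ (the paper takes $M=2/(\lambda_A\alpha)$). Then the iterates of TD-SVRG (Algorithm 1) satisfy, for every $m\ge0$, $$\mathbb E[f_d(\tilde\theta_m)]\le\left(\tfrac23\right)^m f_d(\tilde\theta_0).$$
   Context: Finite-sample setting. Let $\mathcal S$ be a finite state space, $\phi:\mathcal S\to\mathbb R^d$ a feature map with $\|\phi(s)\|_2\le 1$ for all $s$, $r:\mathcal S\times\mathcal S\to\mathbb R$ a reward function and $\gamma\in[0,1)$. For a pair of states $(s,s')$ and $\theta\in\mathbb R^d$ let $g_{s,s'}(\theta)=(r(s,s')+\gamma\phi(s')^T\theta-\phi(s)^T\theta)\phi(s)$. A dataset is a state trajectory $s_1,\dots,s_{N+1}$, giving the $N$ pairs $(s_t,s_{t+1})$, $t=1,\dots,N$. Let $A_d=\frac1N\sum_{t=1}^N\phi(s_t)(\phi(s_t)-\gamma\phi(s_{t+1}))^T$ and $b_d=\frac1N\sum_{t=1}^N r(s_t,s_{t+1})\phi(s_t)$, so that $\bar g(\theta):=\frac1N\sum_{t=1}^N g_{s_t,s_{t+1}}(\theta)=-A_d\theta+b_d$. Assume $A_d$ is nonsingular and let $\theta^*=A_d^{-1}b_d$. Let $\lambda_A$ denote the minimum eigenvalue of $(A_d+A_d^T)/2$. Define $f_d(\theta)=(\theta-\theta^* )^TA_d(\theta-\theta^*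 )$. Algorithm 1 (TD-SVRG): given $\alpha>0$, an integer $M\ge1$ and an initial $\tilde\theta_0\in\mathbb R^d$, for epochs $m=1,2,\dots$: set $\tilde\theta=\tilde\theta_{m-1}$, compute $\bar g(\tilde\theta)$, set $\theta_0=\tilde\theta$; for $t=1,\dots,M$ draw an index $i_t$ uniformly from $\{1,\dots,N\}$, independently of everything else, put $(s,s')=(s_{i_t},s_{i_t+1})$, $v_t=g_{s,s'}(\theta_{t-1})-g_{s,s'}(\tilde\theta)+\bar g(\tilde\theta)$ and $\theta_t=\theta_{t-1}+\alpha v_t$; finally set $\tilde\theta_m=\theta_{t'}$ where $t'$ is drawn uniformly from $\{0,\dots,M-1\}$ independently of everything else. *)

theory Defs
  imports "HOL-Analysis.Analysis" "HOL-Probability.Probability"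
begin

text \<open>TD-SVRG setting. Trajectory s_1..s_{N+1} given as a function traj :: nat => 's,
  features phi :: 's => real^'d, reward r, discount gam.\<close>

definition td_g :: "('s \<Rightarrow> real^'d) \<Rightarrow> ('s \<Rightarrow> 's \<Rightarrow> real) \<Rightarrow> real \<Rightarrow> 's \<Rightarrow> 's \<Rightarrow> real^'d \<Rightarrow> real^'d" where
  "td_g phi r gam s s' \<theta> = (r s s' + gam * (phi s' \<bullet> \<theta>) - phi s \<bullet> \<theta>) *\<^sub>R phi s"

definition td_gbar :: "('s \<Rightarrow> real^'d) \<Rightarrow> ('s \<Rightarrow> 's \<Rightarrow> real) \<Rightarrow> real \<Rightarrow> (nat \<Rightarrow> 's) \<Rightarrow> nat \<Rightarrow> real^'d \<Rightarrow> real^'d" where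
  "td_gbar phi r gam traj N \<theta> = (1 / real N) *\<^sub>R (\<Sum>t=1..N. td_g phi r gam (traj t) (traj (t+1)) \<theta>)"

definition outer_prod :: "real^'d \<Rightarrow> real^'d \<Rightarrow> real^'d^'d" where
  "outer_prod a b = (\<chi> i j. a $ i * b $ j)"

definition td_A :: "('s \<Rightarrow> real^'d) \<Rightarrow> real \<Rightarrow> (nat \<Rightarrow> 's) \<Rightarrow> nat \<Rightarrow> real^'d^'d" where
  "td_A phi gam traj N = (1 / real N) *\<^sub>R (\<Sum>t=1..N. outer_prod (phi (traj t)) (phi (traj t) - gam *\<^sub>R phi (traj (t+1))))"

definition td_b :: "('s \<Rightarrow> real^'d) \<Rightarrow> ('s \<Rightarrow> 's \<Rightarrow> real) \<Rightarrow> (nat \<Rightarrow> 's) \<Rightarrow> nat \<Rightarrow> real^'d" where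
  "td_b phi r traj N = (1 / real N) *\<^sub>R (\<Sum>t=1..N. r (traj t) (traj (t+1)) *\<^sub>R phi (traj t))"

definition min_eigenvalue :: "real^'d^'d \<Rightarrow> real" where
  "min_eigenvalue S = Min {l. \<exists>v. v \<noteq> 0 \<and> S *v v = l *\<^sub>R v}"

definition td_lambdaA :: "('s \<Rightarrow> real^'d) \<Rightarrow> real \<Rightarrow> (nat \<Rightarrow> 's) \<Rightarrow> nat \<Rightarrow> real" where
  "td_lambdaA phi gam traj N =
     min_eigenvalue ((1/2) *\<^sub>R (td_A phi gam traj N + transpose (td_A phi gam traj N)))"

definition td_theta_star :: "('s \<Rightarrow> real^'d) \<Rightarrow> ('s \<Rightarrow> 's \<Rightarrow> real) \<Rightarrow> real \<Rightarrow> (nat \<Rightarrow> 's) \<Rightarrow> nat \<Rightarrow> real^'d" where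
  "td_theta_star phi r gam traj N = matrix_inv (td_A phi gam traj N) *v td_b phi r traj N"

definition td_f :: "('s \<Rightarrow> real^'d) \<Rightarrow> ('s \<Rightarrow> 's \<Rightarrow> real) \<Rightarrow> real \<Rightarrow> (nat \<Rightarrow> 's) \<Rightarrow> nat \<Rightarrow> real^'d \<Rightarrow> real" where
  "td_f phi r gam traj N \<theta> =
     (let d = \<theta> - td_theta_star phi r gam traj N in d \<bullet> (td_A phi gam traj N *v d))"

definition svrg_step :: "('s \<Rightarrow> real^'d) \<Rightarrow> ('s \<Rightarrow> 's \<Rightarrow> real) \<Rightarrow> real \<Rightarrow> (nat \<Rightarrow> 's) \<Rightarrow> nat \<Rightarrow> real
     \<Rightarrow> real^'d \<Rightarrow> real^'d \<Rightarrow> (real^'d) pmf" where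
  "svrg_step phi r gam traj N \<alpha> thetat \<theta> =
     map_pmf (\<lambda>i. \<theta> + \<alpha> *\<^sub>R (td_g phi r gam (traj i) (traj (i+1)) \<theta>
                      - td_g phi r gam (traj i) (traj (i+1)) thetat
                      + td_gbar phi r gam traj N thetat))
       (pmf_of_set {1..N})"

fun svrg_inner :: "('s \<Rightarrow> real^'d) \<Rightarrow> ('s \<Rightarrow> 's \<Rightarrow> real) \<Rightarrow> real \<Rightarrow> (nat \<Rightarrow> 's) \<Rightarrow> nat \<Rightarrow> real
     \<Rightarrow> real^'d \<Rightarrow> nat \<Rightarrow> (real^'d) pmf" where
  "svrg_inner phi r gam traj N \<alpha> thetat 0 = return_pmf thetat"
| "svrg_inner phi r gam traj N \<alpha> thetat (Suc t) =
     bind_pmf (svrg_inner phi r gam traj N \<alpha> thetat t) (svrg_step phi r gam traj N \<alpha> thetat)"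

definition svrg_epoch :: "('s \<Rightarrow> real^'d) \<Rightarrow> ('s \<Rightarrow> 's \<Rightarrow> real) \<Rightarrow> real \<Rightarrow> (nat \<Rightarrow> 's) \<Rightarrow> nat \<Rightarrow> real
     \<Rightarrow> nat \<Rightarrow> real^'d \<Rightarrow> (real^'d) pmf" where
  "svrg_epoch phi r gam traj N \<alpha> M thetat =
     bind_pmf (pmf_of_set {0..<M}) (\<lambda>t'. svrg_inner phi r gam traj N \<alpha> thetat t')"

fun td_svrg :: "('s \<Rightarrow> real^'d) \<Rightarrow> ('s \<Rightarrow> 's \<Rightarrow> real) \<Rightarrow> real \<Rightarrow> (nat \<Rightarrow> 's) \<Rightarrow> nat \<Rightarrow> real
     \<Rightarrow> nat \<Rightarrow> real^'d \<Rightarrow> nat \<Rightarrow> (real^'d) pmf" where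
  "td_svrg phi r gam traj N \<alpha> M theta0 0 = return_pmf theta0"
| "td_svrg phi r gam traj N \<alpha> M theta0 (Suc m) =
     bind_pmf (td_svrg phi r gam traj N \<alpha> M theta0 m) (svrg_epoch phi r gam traj N \<alpha> M)"

end

theory Submission
  imports Defs
begin


lemma exp_bind_fin:
  fixes g :: "'b \<Rightarrow> real"
  assumes fp: "finite (set_pmf p)" and ff: "\<And>x. x \<in> set_pmf p \<Longrightarrow> finite (set_pmf (f x))"
  shows "measure_pmf.expectation (bind_pmf p f) g =
         measure_pmf.expectation p (\<lambda>x. measure_pmf.expectation (f x) g)"
proof -
  define S where "S = (\<Union>x\<in>set_pmf p. set_pmf (f x))"
  have fS: "finite S" using fp ff by (auto simp: S_def)
  have "measure_pmf.expectation (bind_pmf p f) g = (\<Sum>a\<in>S. g a * pmf (bind_pmf p f) a)"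
    by (rule integral_measure_pmf_real[OF fS]) (auto simp: S_def)
  also have "\<dots> = (\<Sum>a\<in>S. g a * (\<Sum>x\<in>set_pmf p. pmf (f x) a * pmf p x))"
    by (intro sum.cong refl arg_cong2[where f="(*)"], simp add: pmf_bind,
        rule integral_measure_pmf_real) (auto simp: fp)
  also have "\<dots> = (\<Sum>x\<in>set_pmf p. (\<Sum>a\<in>S. g a * pmf (f x) a) * pmf p x)"
    by (simp add: sum_distrib_left sum_distrib_right mult_ac sum.swap[of _ S])
  also have "\<dots> = (\<Sum>x\<in>set_pmf p. measure_pmf.expectation (f x) g * pmf p x)"
    by (intro sum.cong refl arg_cong2[where f="(*)"], rule integral_measure_pmf_real[OF fS, symmetric])
       (auto simp: S_def)
  also have "\<dots> = measure_pmf.expectation p (\<lambda>x. measure_pmf.expectation (f x) g)"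
    by (rule integral_measure_pmf_real[symmetric]) (auto simp: fp)
  finally show ?thesis .
qed

lemma fin_step: "N \<ge> 1 \<Longrightarrow> finite (set_pmf (svrg_step phi r gam traj N a tt th))"
  by (simp add: svrg_step_def)

lemma fin_inner: "N \<ge> 1 \<Longrightarrow> finite (set_pmf (svrg_inner phi r gam traj N a tt t))"
  by (induction t) (auto simp: fin_step)

lemma fin_epoch: "N \<ge> 1 \<Longrightarrow> M \<ge> 1 \<Longrightarrow> finite (set_pmf (svrg_epoch phi r gam traj N a M tt))"
  by (auto simp: svrg_epoch_def fin_inner)

lemma fin_svrg: "N \<ge> 1 \<Longrightarrow> M \<ge> 1 \<Longrightarrow> finite (set_pmf (td_svrg phi r gam traj N a M th0 m))"
  by (induction m) (auto simp: fin_epoch)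

lemma exp_mono_fin:
  fixes f g :: "'b \<Rightarrow> real"
  assumes "finite (set_pmf p)" "\<And>x. x \<in> set_pmf p \<Longrightarrow> f x \<le> g x"
  shows "measure_pmf.expectation p f \<le> measure_pmf.expectation p g"
  using assms by (intro integral_mono_AE) (auto simp: integrable_measure_pmf_finite AE_measure_pmf_iff)




lemma sum_matrix_vector: "finite T \<Longrightarrow> (\<Sum>t\<in>T. (M t :: real^'n^'m)) *v z = (\<Sum>t\<in>T. M t *v z)"
  by (induction T rule: finite_induct) (auto simp: algebra_simps)

lemma outer_prod_mult: "outer_prod x y *v z = (y \<bullet> z) *\<^sub>R (x :: real^'d)"
  by (simp add: vec_eq_iff matrix_vector_mult_def outer_prod_def inner_vec_def sum_distrib_left mult_ac)

lemma tele_sum: "(n::nat) \<ge> 1 \<Longrightarrow> (\<Sum>t=1..n. f (t+1)) = (\<Sum>t=1..n. f t) + f (n+1) - (f 1::real)"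
proof (induction n rule: dec_induct)
  case base then show ?case by simp
next
  case (step m) then show ?case by simp
qed

locale td_setting =
  fixes phi :: "'s \<Rightarrow> real^'d" and r :: "'s \<Rightarrow> 's \<Rightarrow> real" and gam :: real
    and traj :: "nat \<Rightarrow> 's" and N :: nat
  assumes phi_le: "\<And>s. norm (phi s) \<le> 1" and gam0: "0 \<le> gam" and gam1: "gam < 1"
    and N1: "N \<ge> 1" and inv: "invertible (td_A phi gam traj N)"
begin

abbreviation "A \<equiv> td_A phi gam traj N"
abbreviation "ts \<equiv> td_theta_star phi r gam traj N"
abbreviation "bb \<equiv> td_b phi r traj N"
definition "p t = phi (traj t)"
definition "a t = phi (traj t) - gam *\<^sub>R phi (traj (t+1))"
definition "q z = z \<bullet> (A *v z)"
definition "V z = (1 / real N) * (\<Sum>t=1..N. (a t \<bullet> z)\<^sup>2)"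

lemma A_mult: "A *v z = (1 / real N) *\<^sub>R (\<Sum>t=1..N. (a t \<bullet> z) *\<^sub>R p t)"
  unfolding td_A_def
  by (simp add: scaleR_matrix_vector_assoc[symmetric] sum_matrix_vector outer_prod_mult a_def p_def)

lemma g_eq: "td_g phi r gam (traj t) (traj (t+1)) th = r (traj t) (traj (t+1)) *\<^sub>R p t - (a t \<bullet> th) *\<^sub>R p t"
  by (simp add: td_g_def a_def p_def algebra_simps inner_diff_left)

lemma gbar_eq: "td_gbar phi r gam traj N th = bb - A *v th"
  unfolding td_gbar_def td_b_def A_mult g_eq
  by (simp add: sum_subtractf p_def scaleR_diff_right)

lemma A_ts: "A *v ts = bb"
proof -
  have "A ** matrix_inv A = mat 1"
    using inv unfolding invertible_def matrix_inv_def by (rule someI2_ex) auto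
  then show ?thesis
    by (simp add: td_theta_star_def matrix_vector_mul_assoc)
qed

lemma gbar_eq2: "td_gbar phi r gam traj N th = - (A *v (th - ts))"
  by (simp add: gbar_eq matrix_vector_mult_diff_distrib A_ts)

lemma q_sum: "q z = (1 / real N) * (\<Sum>t=1..N. (a t \<bullet> z) * (p t \<bullet> z))"
  unfolding q_def A_mult by (simp add: inner_sum_right) (simp add: inner_commute mult.commute)

lemma phi_inner_sq: "(phi s \<bullet> z)\<^sup>2 \<le> (norm z)\<^sup>2"
proof -
  have "\<bar>phi s \<bullet> z\<bar> \<le> norm (phi s) * norm z" by (rule Cauchy_Schwarz_ineq2)
  also have "\<dots> \<le> norm z" using phi_le[of s] by (simp add: mult_left_le_one_le)
  finally show ?thesis by (metis abs_ge_zero power2_abs power_mono)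
qed

lemma V_bound: "V z \<le> 2 * q z + gam\<^sup>2 * (norm z)\<^sup>2 / real N"
proof -
  have eq: "(a t \<bullet> z)\<^sup>2 = 2 * ((a t \<bullet> z) * (p t \<bullet> z)) - (p t \<bullet> z)\<^sup>2 + gam\<^sup>2 * (p (t+1) \<bullet> z)\<^sup>2" for t
    by (simp add: a_def p_def inner_diff_left power2_eq_square algebra_simps)
  have tele: "(\<Sum>t=1..N. (p (t+1) \<bullet> z)\<^sup>2) = (\<Sum>t=1..N. (p t \<bullet> z)\<^sup>2) + (p (N+1) \<bullet> z)\<^sup>2 - (p 1 \<bullet> z)\<^sup>2"
    using tele_sum[OF N1, of "\<lambda>t. (p t \<bullet> z)\<^sup>2"] by simp
  have s1: "(\<Sum>t=1..N. (a t \<bullet> z)\<^sup>2) = 2 * (\<Sum>t=1..N. (a t \<bullet> z) * (p t \<bullet> z))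
       - (1 - gam\<^sup>2) * (\<Sum>t=1..N. (p t \<bullet> z)\<^sup>2) + gam\<^sup>2 * ((p (N+1) \<bullet> z)\<^sup>2 - (p 1 \<bullet> z)\<^sup>2)"
    unfolding eq using tele by (simp add: sum.distrib sum_subtractf sum_distrib_left[symmetric] algebra_simps) (metis distrib_left)
  have "0 \<le> (1 - gam\<^sup>2) * (\<Sum>t=1..N. (p t \<bullet> z)\<^sup>2)"
    using gam0 gam1 by (intro mult_nonneg_nonneg sum_nonneg) (auto simp: power_le_one)
  moreover have "(p (N+1) \<bullet> z)\<^sup>2 - (p 1 \<bullet> z)\<^sup>2 \<le> (norm z)\<^sup>2"
    using phi_inner_sq[of "traj (N+1)" z] unfolding p_def by (smt (verit) zero_le_power2)
  ultimately have "(\<Sum>t=1..N. (a t \<bullet> z)\<^sup>2) \<le> 2 * (\<Sum>t=1..N. (a t \<bullet> z) * (p t \<bullet> z)) + gam\<^sup>2 * (norm z)\<^sup>2"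
    unfolding s1 by (smt (verit, best) mult_left_mono zero_le_power2)
  then have "(1/real N) * (\<Sum>t=1..N. (a t \<bullet> z)\<^sup>2) \<le> (1/real N) * (2 * (\<Sum>t=1..N. (a t \<bullet> z) * (p t \<bullet> z)) + gam\<^sup>2 * (norm z)\<^sup>2)"
    by (rule mult_left_mono) simp
  then show ?thesis by (simp add: V_def q_sum algebra_simps add_divide_distrib)
qed

end



lemma sym_finite_eig:
  fixes S :: "real^'d^'d"
  assumes sym: "\<And>u v. u \<bullet> (S *v v) = (S *v u) \<bullet> v"
  shows "finite {l. \<exists>v. v \<noteq> 0 \<and> S *v v = l *\<^sub>R v}"
proof -
  define E where "E = {l. \<exists>v. v \<noteq> 0 \<and> S *v v = l *\<^sub>R v}"
  define ev where "ev l = (SOME v. v \<noteq> 0 \<and> S *v v = l *\<^sub>R v)" for l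
  have ev: "ev l \<noteq> 0 \<and> S *v ev l = l *\<^sub>R ev l" if lE: "l \<in> E" for l
  proof -
    obtain v where "v \<noteq> 0 \<and> S *v v = l *\<^sub>R v" using lE E_def by auto
    then show ?thesis unfolding ev_def by (rule someI)
  qed
  have inj: "inj_on ev E"
  proof (rule inj_onI)
    fix l m assume l: "l \<in> E" and m: "m \<in> E" and e: "ev l = ev m"
    have "l *\<^sub>R ev l = m *\<^sub>R ev l" using ev[OF l] ev[OF m] e by metis
    then show "l = m" using ev[OF l] by (simp add: scaleR_cancel_right)
  qed
  have orth: "pairwise orthogonal (ev ` E)"
  proof (clarsimp simp: pairwise_def)
    fix l m assume l: "l \<in> E" and m: "m \<in> E" and ne: "ev l \<noteq> ev m"
    then have lm: "l \<noteq> m" by auto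
    have "ev l \<bullet> (S *v ev m) = (S *v ev l) \<bullet> ev m" by (rule sym)
    then have "m * (ev l \<bullet> ev m) = l * (ev l \<bullet> ev m)" using ev[OF l] ev[OF m] by simp
    then have "ev l \<bullet> ev m = 0" using lm by simp
    then show "orthogonal (ev l) (ev m)" by (simp add: orthogonal_def)
  qed
  have "0 \<notin> ev ` E" using ev by auto
  then have "independent (ev ` E)" using orth by (rule pairwise_orthogonal_independent[rotated])
  then have "finite (ev ` E)" using independent_bound by blast
  then show ?thesis using inj finite_imageD E_def by blast
qed

lemma sym_quad_min:
  fixes S :: "real^'d^'d"
  assumes sym: "\<And>u v. u \<bullet> (S *v v) = (S *v u) \<bullet> v"
  shows "z \<bullet> (S *v z) \<ge> min_eigenvalue S * (norm z)\<^sup>2"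
proof -
  let ?Q = "\<lambda>z. z \<bullet> (S *v z)"
  have cont: "continuous_on (sphere 0 1) ?Q"
    by (intro continuous_intros continuous_on_id linear_continuous_on bounded_linear_inner_right
         matrix_vector_mul_bounded_linear)
  obtain i :: 'd where True by blast
  have ne: "sphere (0::real^'d) 1 \<noteq> {}"
    using norm_axis_1[of i] by (metis mem_sphere_0 empty_iff)
  obtain x0 where x0: "x0 \<in> sphere 0 1" and mn: "\<And>y. y \<in> sphere 0 1 \<Longrightarrow> ?Q x0 \<le> ?Q y"
    using continuous_attains_inf[OF compact_sphere ne cont] by blast
  define mu where "mu = ?Q x0"
  have nx0: "norm x0 = 1" using x0 by simp
  have lowb: "?Q y \<ge> mu * (norm y)\<^sup>2" for y
  proof (cases "y = 0")
    case True then show ?thesis by simp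
  next
    case False
    let ?u = "(1 / norm y) *\<^sub>R y"
    have "?u \<in> sphere 0 1" using False by simp
    then have "mu \<le> ?Q ?u" using mn mu_def by blast
    also have "?Q ?u = ?Q y / (norm y)\<^sup>2"
      by (simp add: matrix_vector_mult_scaleR power2_eq_square)
    finally show ?thesis using False by (simp add: pos_le_divide_eq)
  qed
  have key: "w \<bullet> (S *v x0) = mu * (w \<bullet> x0)" for w
  proof (rule ccontr)
    assume "w \<bullet> (S *v x0) \<noteq> mu * (w \<bullet> x0)"
    define k where "k = w \<bullet> (S *v x0) - mu * (w \<bullet> x0)"
    define c where "c = ?Q w - mu * (norm w)\<^sup>2"
    have k0: "k \<noteq> 0" using \<open>w \<bullet> (S *v x0) \<noteq> _\<close> k_def by simp
    have c0: "c \<ge> 0" using lowb[of w] c_def by simp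
    have expand: "?Q (x0 + t *\<^sub>R w) - mu * (norm (x0 + t *\<^sub>R w))\<^sup>2 = 2 * t * k + t\<^sup>2 * c" for t
    proof -
      have s: "x0 \<bullet> (S *v w) = w \<bullet> (S *v x0)" using sym[of x0 w] by (simp add: inner_commute)
      have "(norm (x0 + t *\<^sub>R w))\<^sup>2 = (x0 + t *\<^sub>R w) \<bullet> (x0 + t *\<^sub>R w)"
        by (rule power2_norm_eq_inner)
      also have "\<dots> = x0 \<bullet> x0 + 2 * t * (w \<bullet> x0) + t\<^sup>2 * (w \<bullet> w)"
        by (simp add: inner_add_left inner_add_right inner_commute power2_eq_square algebra_simps)
      also have "\<dots> = 1 + 2 * t * (w \<bullet> x0) + t\<^sup>2 * (norm w)\<^sup>2"
        using nx0 by (simp add: dot_square_norm)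
      finally have "(norm (x0 + t *\<^sub>R w))\<^sup>2 = 1 + 2 * t * (w \<bullet> x0) + t\<^sup>2 * (norm w)\<^sup>2" .
      then show ?thesis
        by (simp add: k_def c_def mu_def matrix_vector_right_distrib matrix_vector_mult_scaleR
            inner_add_left inner_add_right s power2_eq_square algebra_simps)
    qed
    define d where "d = c + 1"
    have d0: "d > 0" using c0 d_def by simp
    have cd: "c = d - 1" using d_def by simp
    define t where "t = - k / d"
    have "0 \<le> 2 * t * k + t\<^sup>2 * c" using lowb[of "x0 + t *\<^sub>R w"] expand[of t] by simp
    also have "2 * t * k + t\<^sup>2 * c = - (k\<^sup>2 * (d + 1)) / d\<^sup>2"
      unfolding t_def cd using d0 by (simp add: power2_eq_square field_simps)
    also have "- (k\<^sup>2 * (d + 1)) / d\<^sup>2 < 0" using k0 d0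
      by (intro divide_neg_pos) (auto intro!: mult_pos_pos)
    finally show False by simp
  qed
  have "S *v x0 = mu *\<^sub>R x0"
  proof -
    define u where "u = S *v x0 - mu *\<^sub>R x0"
    have "u \<bullet> u = u \<bullet> (S *v x0) - mu * (u \<bullet> x0)"
      by (subst (2) u_def) (simp add: inner_diff_right)
    then have "u \<bullet> u = 0" using key[of u] by simp
    then show ?thesis by (simp add: u_def)
  qed
  moreover have "x0 \<noteq> 0" using nx0 by auto
  ultimately have "mu \<in> {l. \<exists>v. v \<noteq> 0 \<and> S *v v = l *\<^sub>R v}" by blast
  then have "min_eigenvalue S \<le> mu"
    unfolding min_eigenvalue_def using sym_finite_eig[OF sym] by (rule Min_le[rotated])
  then have "min_eigenvalue S * (norm z)\<^sup>2 \<le> mu * (norm z)\<^sup>2" by (simp add: mult_right_mono)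
  then show ?thesis using lowb[of z] by linarith
qed




lemma var_le:
  fixes W :: "nat \<Rightarrow> real^'d"
  assumes "finite I" "I \<noteq> {}"
  shows "(\<Sum>i\<in>I. (norm (W i - (1 / real (card I)) *\<^sub>R (\<Sum>j\<in>I. W j)))\<^sup>2) \<le> (\<Sum>i\<in>I. (norm (W i))\<^sup>2)"
proof -
  define n where "n = real (card I)"
  have n0: "n > 0" using assms by (simp add: n_def card_gt_0_iff)
  define m where "m = (1 / n) *\<^sub>R (\<Sum>j\<in>I. W j)"
  have sW: "(\<Sum>j\<in>I. W j) = n *\<^sub>R m" using n0 by (simp add: m_def)
  have "(\<Sum>i\<in>I. (norm (W i - m))\<^sup>2) = (\<Sum>i\<in>I. (norm (W i))\<^sup>2 - 2 * (m \<bullet> W i) + (norm m)\<^sup>2)"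
    by (intro sum.cong refl) (simp add: power2_norm_eq_inner inner_diff_left inner_diff_right inner_commute)
  also have "\<dots> = (\<Sum>i\<in>I. (norm (W i))\<^sup>2) - 2 * (m \<bullet> (\<Sum>j\<in>I. W j)) + n * (norm m)\<^sup>2"
    by (simp add: sum.distrib sum_subtractf inner_sum_right sum_distrib_left n_def)
  also have "\<dots> = (\<Sum>i\<in>I. (norm (W i))\<^sup>2) - n * (norm m)\<^sup>2"
    by (simp add: sW power2_norm_eq_inner)
  also have "\<dots> \<le> (\<Sum>i\<in>I. (norm (W i))\<^sup>2)" using n0 by simp
  finally show ?thesis by (simp add: m_def n_def)
qed

context td_setting
begin

lemma A_sym_quad: "z \<bullet> (transpose A *v z) = z \<bullet> (A *v z)"
  apply (subst inner_commute)
  apply (subst transpose_matrix_vector)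
  apply (rule dot_lmul_matrix)
  done

lemma S_sym:
  fixes S defines "S \<equiv> (1/2) *\<^sub>R (A + transpose A)"
  shows "u \<bullet> (S *v v) = (S *v u) \<bullet> v"
proof -
  have t: "u \<bullet> (transpose A *v v) = (A *v u) \<bullet> v" for u v
    apply (subst inner_commute)
    apply (subst transpose_matrix_vector)
    apply (subst dot_lmul_matrix)
    apply (rule inner_commute)
    done
  have t2: "(transpose A *v u) \<bullet> v = u \<bullet> (A *v v)" for u v
    using t[of v u] by (simp add: inner_commute del: transpose_matrix_vector)
  show ?thesis
    unfolding S_def scaleR_matrix_vector_assoc[symmetric] matrix_vector_mult_add_rdistrib
    by (simp add: inner_add_left inner_add_right t t2 del: transpose_matrix_vector)
qed

lemma q_lower:
  assumes "td_lambdaA phi gam traj N > 0"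
  shows "q z \<ge> td_lambdaA phi gam traj N * (norm z)\<^sup>2"
proof -
  define S where "S \<equiv> (1/2) *\<^sub>R (A + transpose A)"
  have "z \<bullet> (S *v z) = q z"
    unfolding S_def scaleR_matrix_vector_assoc[symmetric] matrix_vector_mult_add_rdistrib
    by (simp add: inner_add_right A_sym_quad q_def del: transpose_matrix_vector)
  moreover have "z \<bullet> (S *v z) \<ge> min_eigenvalue S * (norm z)\<^sup>2"
    by (rule sym_quad_min) (simp add: S_sym S_def)
  ultimately show ?thesis by (simp add: td_lambdaA_def S_def)
qed

end


lemma norm_expand: "(norm (x + c *\<^sub>R u))\<^sup>2 = (norm x)\<^sup>2 + 2*c*(x \<bullet> u) + c\<^sup>2*(norm (u::real^'d))\<^sup>2"
  unfolding power2_norm_eq_inner by (simp add: inner_add_left inner_add_right inner_commute power2_eq_square algebra_simps)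

context td_setting begin
lemma step_bound:
  "measure_pmf.expectation (svrg_step phi r gam traj N al tt th) (\<lambda>z. (norm (z - ts))\<^sup>2)
   \<le> (norm (th - ts))\<^sup>2 - 2 * al * q (th - ts) + 2 * al\<^sup>2 * (V (th - ts) + V (tt - ts))"
proof -
  define x where "x = th - ts"
  define y where "y = tt - ts"
  define I where "I = {1..N}"
  have fI: "finite I" and I0: "I \<noteq> {}" and cI: "real (card I) = real N"
    using N1 by (auto simp: I_def)
  have Npos: "real N > 0" using N1 by simp
  define P where "P i = (a i \<bullet> x) *\<^sub>R p i" for i
  define W where "W i = (a i \<bullet> y) *\<^sub>R p i" for i
  define m where "m = (1 / real N) *\<^sub>R (\<Sum>j\<in>I. W j)"
  have mA: "m = A *v y" by (simp add: m_def A_mult W_def I_def)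
  define D where "D i = W i - m" for i
  have vi: "th + al *\<^sub>R (td_g phi r gam (traj i) (traj (i+1)) th - td_g phi r gam (traj i) (traj (i+1)) tt
                      + td_gbar phi r gam traj N tt) - ts = x + al *\<^sub>R (D i - P i)" for i
  proof -
    have "a i \<bullet> th - a i \<bullet> tt = a i \<bullet> x - a i \<bullet> y" by (simp add: x_def y_def inner_diff_right)
    then have "(a i \<bullet> tt) *\<^sub>R p i - (a i \<bullet> th) *\<^sub>R p i = W i - P i"
      by (simp add: W_def P_def scaleR_diff_left[symmetric])
    then show ?thesis
      unfolding g_eq gbar_eq2 by (simp add: D_def mA y_def[symmetric] x_def algebra_simps) (metis scaleR_add_right scaleR_scaleR)
  qed
  have E: "measure_pmf.expectation (svrg_step phi r gam traj N al tt th) (\<lambda>z. (norm (z - ts))\<^sup>2)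
        = (\<Sum>i\<in>I. (norm (x + al *\<^sub>R (D i - P i)))\<^sup>2) / real N"
    unfolding svrg_step_def integral_map_pmf vi
    using fI I0 cI by (simp add: integral_pmf_of_set I_def)
  have expand: "(norm (x + al *\<^sub>R (D i - P i)))\<^sup>2
      = (norm x)\<^sup>2 + 2 * al * (x \<bullet> D i) - 2 * al * (x \<bullet> P i) + al\<^sup>2 * (norm (D i - P i))\<^sup>2" for i
    unfolding norm_expand by (simp add: inner_diff_right algebra_simps)
  have sD: "(\<Sum>i\<in>I. x \<bullet> D i) = 0"
    using Npos cI by (simp add: D_def inner_diff_right sum_subtractf inner_sum_right[symmetric] m_def)
  have sP: "(\<Sum>i\<in>I. x \<bullet> P i) = real N * q x"
    using Npos by (simp add: q_sum P_def I_def inner_commute mult_ac)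
  have nDP: "(norm (D i - P i))\<^sup>2 \<le> 2 * (norm (D i))\<^sup>2 + 2 * (norm (P i))\<^sup>2" for i
  proof -
    have "(norm (D i - P i))\<^sup>2 + (norm (D i + P i))\<^sup>2 = 2 * (norm (D i))\<^sup>2 + 2 * (norm (P i))\<^sup>2"
      by (simp add: power2_norm_eq_inner inner_add_left inner_add_right inner_diff_left inner_diff_right
          inner_commute)
    then show ?thesis by (smt (verit) zero_le_power2)
  qed
  have nP: "(norm (P i))\<^sup>2 \<le> (a i \<bullet> x)\<^sup>2" for i
  proof -
    have "norm (p i) \<le> 1" using phi_le by (simp add: p_def)
    then have "(norm (p i))\<^sup>2 \<le> 1" by (simp add: power_le_one)
    then show ?thesis by (simp add: P_def power_mult_distrib mult_left_le)
  qed
  have nW: "(norm (W i))\<^sup>2 \<le> (a i \<bullet> y)\<^sup>2" for i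
  proof -
    have "norm (p i) \<le> 1" using phi_le by (simp add: p_def)
    then have "(norm (p i))\<^sup>2 \<le> 1" by (simp add: power_le_one)
    then show ?thesis by (simp add: W_def power_mult_distrib mult_left_le)
  qed
  have sumD: "(\<Sum>i\<in>I. (norm (D i))\<^sup>2) \<le> real N * V y"
  proof -
    have "(\<Sum>i\<in>I. (norm (D i))\<^sup>2) \<le> (\<Sum>i\<in>I. (norm (W i))\<^sup>2)"
      using var_le[OF fI I0, of W] cI by (simp add: D_def m_def)
    also have "\<dots> \<le> (\<Sum>i\<in>I. (a i \<bullet> y)\<^sup>2)" by (rule sum_mono) (rule nW)
    also have "\<dots> = real N * V y" using Npos by (simp add: V_def I_def)
    finally show ?thesis .
  qed
  have sumP: "(\<Sum>i\<in>I. (norm (P i))\<^sup>2) \<le> real N * V x"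
  proof -
    have "(\<Sum>i\<in>I. (norm (P i))\<^sup>2) \<le> (\<Sum>i\<in>I. (a i \<bullet> x)\<^sup>2)" by (rule sum_mono) (rule nP)
    also have "\<dots> = real N * V x" using Npos by (simp add: V_def I_def)
    finally show ?thesis .
  qed
  have "(\<Sum>i\<in>I. (norm (D i - P i))\<^sup>2) \<le> (\<Sum>i\<in>I. 2 * (norm (D i))\<^sup>2 + 2 * (norm (P i))\<^sup>2)"
    by (rule sum_mono) (rule nDP)
  also have "\<dots> \<le> 2 * (real N * V y) + 2 * (real N * V x)"
    using sumD sumP by (simp add: sum.distrib sum_distrib_left[symmetric])
  finally have sDP: "(\<Sum>i\<in>I. (norm (D i - P i))\<^sup>2) \<le> real N * (2 * (V x + V y))"
    by (simp add: algebra_simps)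
  have "(\<Sum>i\<in>I. (norm (x + al *\<^sub>R (D i - P i)))\<^sup>2)
      = real N * (norm x)\<^sup>2 + 2 * al * (\<Sum>i\<in>I. x \<bullet> D i) - 2 * al * (\<Sum>i\<in>I. x \<bullet> P i)
        + al\<^sup>2 * (\<Sum>i\<in>I. (norm (D i - P i))\<^sup>2)"
    unfolding expand using cI by (simp add: sum.distrib sum_subtractf sum_distrib_left)
  also have "\<dots> = real N * ((norm x)\<^sup>2 - 2 * al * q x) + al\<^sup>2 * (\<Sum>i\<in>I. (norm (D i - P i))\<^sup>2)"
    by (simp add: sD sP algebra_simps)
  also have "\<dots> \<le> real N * ((norm x)\<^sup>2 - 2 * al * q x) + al\<^sup>2 * (real N * (2 * (V x + V y)))"
    using sDP by (intro add_left_mono mult_left_mono) auto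
  finally have "(\<Sum>i\<in>I. (norm (x + al *\<^sub>R (D i - P i)))\<^sup>2) / real N
      \<le> (real N * ((norm x)\<^sup>2 - 2 * al * q x) + al\<^sup>2 * (real N * (2 * (V x + V y)))) / real N"
    using Npos by (simp add: divide_right_mono)
  also have "\<dots> = (norm x)\<^sup>2 - 2 * al * q x + 2 * al\<^sup>2 * (V x + V y)"
    using Npos by (simp add: field_simps)
  finally show ?thesis unfolding E x_def y_def .
qed

end



lemma exp_affine:
  fixes f g :: "'b \<Rightarrow> real"
  assumes fin: "finite (set_pmf p)"
  shows "measure_pmf.expectation p (\<lambda>x. f x - a * g x + b * (g x + c))
       = measure_pmf.expectation p f - a * measure_pmf.expectation p g + b * (measure_pmf.expectation p g + c)"
proof -
  have e: "measure_pmf.expectation p h = (\<Sum>x\<in>set_pmf p. h x * pmf p x)" for h :: "'b \<Rightarrow> real"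
    by (rule integral_measure_pmf_real) (auto simp: fin)
  have one: "(\<Sum>x\<in>set_pmf p. pmf p x) = 1" by (rule sum_pmf_eq_1) (auto simp: fin)
  have "(\<Sum>x\<in>set_pmf p. (f x - a * g x + b * (g x + c)) * pmf p x)
      = (\<Sum>x\<in>set_pmf p. f x * pmf p x) - a * (\<Sum>x\<in>set_pmf p. g x * pmf p x)
        + b * ((\<Sum>x\<in>set_pmf p. g x * pmf p x) + c * (\<Sum>x\<in>set_pmf p. pmf p x))"
    by (simp add: sum.distrib sum_subtractf sum_distrib_left algebra_simps)
  then show ?thesis unfolding e one by simp
qed

lemma tele_gen:
  fixes d Q :: "nat \<Rightarrow> real"
  assumes "\<And>n. d (Suc n) \<le> d n - k * Q n + b"
  shows "d n + k * (\<Sum>t<n. Q t) \<le> d 0 + real n * b"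
proof (induction n)
  case 0 then show ?case by simp
next
  case (Suc n)
  have "d (Suc n) + k * (\<Sum>t<Suc n. Q t) = d (Suc n) + k * Q n + k * (\<Sum>t<n. Q t)"
    by (simp add: algebra_simps)
  also have "\<dots> \<le> d n + b + k * (\<Sum>t<n. Q t)" using assms[of n] by simp
  also have "\<dots> \<le> d 0 + real (Suc n) * b" using Suc.IH by (simp add: algebra_simps)
  finally show ?case .
qed

context td_setting begin

abbreviation "lam \<equiv> td_lambdaA phi gam traj N"

lemma f_fun: "td_f phi r gam traj N = (\<lambda>th. q (th - ts))"
  by (rule ext) (simp add: td_f_def q_def Let_def)

lemma V_q:
  assumes "lam > 0"
  shows "V z \<le> (2 + gam\<^sup>2 / (real N * lam)) * q z"
proof -
  have Npos: "real N > 0" using N1 by simp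
  have "(norm z)\<^sup>2 \<le> q z / lam" using q_lower[OF assms, of z] assms
    by (simp add: pos_le_divide_eq mult.commute)
  then have "gam\<^sup>2 * (norm z)\<^sup>2 / real N \<le> gam\<^sup>2 * (q z / lam) / real N"
    by (intro divide_right_mono mult_left_mono) auto
  also have "\<dots> = gam\<^sup>2 / (real N * lam) * q z" by simp
  finally show ?thesis using V_bound[of z] by (simp add: algebra_simps)
qed

lemma inner_rec:
  assumes "lam > 0"
  shows "measure_pmf.expectation (svrg_inner phi r gam traj N al tt (Suc t)) (\<lambda>z. (norm (z - ts))\<^sup>2)
    \<le> measure_pmf.expectation (svrg_inner phi r gam traj N al tt t) (\<lambda>z. (norm (z - ts))\<^sup>2)
       - 2 * al * measure_pmf.expectation (svrg_inner phi r gam traj N al tt t) (\<lambda>z. q (z - ts))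
       + (2 * al\<^sup>2 * (2 + gam\<^sup>2 / (real N * lam))) *
         (measure_pmf.expectation (svrg_inner phi r gam traj N al tt t) (\<lambda>z. q (z - ts)) + q (tt - ts))"
proof -
  let ?p = "svrg_inner phi r gam traj N al tt t"
  let ?c = "2 + gam\<^sup>2 / (real N * lam)"
  have fin: "finite (set_pmf ?p)" using fin_inner N1 by blast
  have "measure_pmf.expectation (svrg_inner phi r gam traj N al tt (Suc t)) (\<lambda>z. (norm (z - ts))\<^sup>2)
      = measure_pmf.expectation ?p (\<lambda>th. measure_pmf.expectation (svrg_step phi r gam traj N al tt th) (\<lambda>z. (norm (z - ts))\<^sup>2))"
    unfolding svrg_inner.simps by (rule exp_bind_fin[OF fin fin_step[OF N1]])
  also have "\<dots> \<le> measure_pmf.expectation ?p (\<lambda>th. (norm (th - ts))\<^sup>2 - 2 * al * q (th - ts) + 2 * al\<^sup>2 * (V (th - ts) + V (tt - ts)))"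
    by (rule exp_mono_fin[OF fin]) (rule step_bound)
  also have "\<dots> \<le> measure_pmf.expectation ?p (\<lambda>th. (norm (th - ts))\<^sup>2 - 2 * al * q (th - ts) + (2 * al\<^sup>2 * ?c) * (q (th - ts) + q (tt - ts)))"
  proof (rule exp_mono_fin[OF fin])
    fix th
    have "V (th - ts) + V (tt - ts) \<le> ?c * q (th - ts) + ?c * q (tt - ts)"
      using V_q[OF assms, of "th - ts"] V_q[OF assms, of "tt - ts"] by simp
    then have h: "2 * al\<^sup>2 * (V (th - ts) + V (tt - ts)) \<le> 2 * al\<^sup>2 * (?c * q (th - ts) + ?c * q (tt - ts))"
      by (intro mult_left_mono) auto
    have eq: "(2 * al\<^sup>2 * ?c) * (q (th - ts) + q (tt - ts)) = 2 * al\<^sup>2 * (?c * q (th - ts) + ?c * q (tt - ts))"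
      by (simp add: algebra_simps)
    show "(norm (th - ts))\<^sup>2 - 2 * al * q (th - ts) + 2 * al\<^sup>2 * (V (th - ts) + V (tt - ts))
        \<le> (norm (th - ts))\<^sup>2 - 2 * al * q (th - ts) + (2 * al\<^sup>2 * ?c) * (q (th - ts) + q (tt - ts))"
      unfolding eq using h by linarith
  qed
  also have "\<dots> = measure_pmf.expectation ?p (\<lambda>z. (norm (z - ts))\<^sup>2)
       - 2 * al * measure_pmf.expectation ?p (\<lambda>z. q (z - ts))
       + (2 * al\<^sup>2 * ?c) * (measure_pmf.expectation ?p (\<lambda>z. q (z - ts)) + q (tt - ts))"
    by (rule exp_affine[OF fin, where f="\<lambda>z. (norm (z - ts))\<^sup>2" and g="\<lambda>z. q (z - ts)"])
  finally show ?thesis .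
qed

lemma epoch_bound:
  assumes lam0: "lam > 0" and M1: "M \<ge> 1"
    and al: "al = 1 / (8 + 4 * gam\<^sup>2 / (real N * lam))"
    and Mb: "real M \<ge> 2 / (lam * al)"
  shows "measure_pmf.expectation (svrg_epoch phi r gam traj N al M tt) (td_f phi r gam traj N)
         \<le> 2/3 * td_f phi r gam traj N tt"
proof -
  define g2 where "g2 = gam\<^sup>2 / (real N * lam)"
  have g20: "g2 \<ge> 0" using lam0 by (simp add: g2_def)
  have al': "al = 1 / (8 + 4 * g2)" using al by (simp add: g2_def)
  have al0: "al > 0" using al' g20 by simp
  have alc: "al * (2 + g2) = 1/4" using al' g20 by (simp add: field_simps)
  define Dn where "Dn t = measure_pmf.expectation (svrg_inner phi r gam traj N al tt t) (\<lambda>z. (norm (z - ts))\<^sup>2)" for t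
  define Qn where "Qn t = measure_pmf.expectation (svrg_inner phi r gam traj N al tt t) (\<lambda>z. q (z - ts))" for t
  define y where "y = tt - ts"
  have qy0: "q y \<ge> 0" using q_lower[OF lam0, of y] lam0 by (smt (verit) mult_nonneg_nonneg zero_le_power2)
  have rec: "Dn (Suc n) \<le> Dn n - (3/2 * al) * Qn n + al / 2 * q y" for n
  proof -
    have "Dn (Suc n) \<le> Dn n - 2 * al * Qn n + (2 * al\<^sup>2 * (2 + g2)) * (Qn n + q y)"
      using inner_rec[OF lam0, of al tt n] by (simp add: Dn_def Qn_def g2_def y_def)
    also have "2 * al\<^sup>2 * (2 + g2) = 2 * al * (al * (2 + g2))" by (simp add: power2_eq_square mult_ac)
    also have "\<dots> = al / 2" using alc by simp
    finally show ?thesis by (simp add: algebra_simps)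
  qed
  have tele: "Dn M + (3/2 * al) * (\<Sum>t<M. Qn t) \<le> Dn 0 + real M * (al / 2 * q y)"
    by (rule tele_gen) (rule rec)
  have D0: "Dn 0 = (norm y)\<^sup>2" by (simp add: Dn_def y_def)
  have Dnn: "Dn M \<ge> 0" unfolding Dn_def by (rule integral_nonneg_AE) auto
  have ny: "(norm y)\<^sup>2 \<le> q y / lam" using q_lower[OF lam0, of y] lam0
    by (simp add: pos_le_divide_eq mult.commute)
  have h1: "3 * al * (\<Sum>t<M. Qn t) \<le> 2 * (q y / lam) + real M * al * q y"
    using tele D0 Dnn ny by (simp add: algebra_simps)
  have "real M * (lam * al) \<ge> 2" using Mb lam0 al0 by (simp add: pos_divide_le_eq)
  then have "real M * al \<ge> 2 / lam" using lam0 by (simp add: pos_divide_le_eq mult_ac)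
  then have h2: "2 * (q y / lam) \<le> real M * al * q y" using qy0
    by (metis mult_right_mono times_divide_eq_left times_divide_eq_right)
  have "3 * al * (\<Sum>t<M. Qn t) \<le> al * (2 * real M * q y)" using h1 h2 by (simp add: algebra_simps)
  then have S: "(\<Sum>t<M. Qn t) \<le> 2/3 * real M * q y" using al0 by (simp add: field_simps)
  have Mpos: "real M > 0" using M1 by simp
  have fM: "finite (set_pmf (pmf_of_set {0..<M}))" using M1 by simp
  have "measure_pmf.expectation (svrg_epoch phi r gam traj N al M tt) (td_f phi r gam traj N)
      = measure_pmf.expectation (pmf_of_set {0..<M}) Qn"
    unfolding svrg_epoch_def f_fun Qn_def
    by (rule exp_bind_fin[OF fM fin_inner[OF N1]])
  also have "\<dots> = (\<Sum>t<M. Qn t) / real M" using M1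
    by (subst integral_pmf_of_set) (auto simp: atLeast0LessThan lessThan_empty_iff)
  also have "\<dots> \<le> 2/3 * q y" using S Mpos by (simp add: pos_divide_le_eq mult_ac)
  finally show ?thesis by (simp add: f_fun y_def)
qed

lemma main:
  assumes lam0: "lam > 0" and M1: "M \<ge> 1"
    and Mb: "real M \<ge> 2 / (lam * (1 / (8 + 4 * gam\<^sup>2 / (real N * lam))))"
  shows "measure_pmf.expectation
              (td_svrg phi r gam traj N (1 / (8 + 4 * gam\<^sup>2 / (real N * lam))) M theta0 m)
              (td_f phi r gam traj N)
           \<le> (2/3) ^ m * td_f phi r gam traj N theta0"
proof (induction m)
  case 0 then show ?case by simp
next
  case (Suc m)
  let ?al = "1 / (8 + 4 * gam\<^sup>2 / (real N * lam))"
  let ?p = "td_svrg phi r gam traj N ?al M theta0 m"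
  have fin: "finite (set_pmf ?p)" using fin_svrg N1 M1 by blast
  have "measure_pmf.expectation (td_svrg phi r gam traj N ?al M theta0 (Suc m)) (td_f phi r gam traj N)
      = measure_pmf.expectation ?p (\<lambda>tt. measure_pmf.expectation (svrg_epoch phi r gam traj N ?al M tt) (td_f phi r gam traj N))"
    unfolding td_svrg.simps by (rule exp_bind_fin[OF fin fin_epoch[OF N1 M1]])
  also have "\<dots> \<le> measure_pmf.expectation ?p (\<lambda>tt. 2/3 * td_f phi r gam traj N tt)"
    by (rule exp_mono_fin[OF fin]) (rule epoch_bound[OF lam0 M1 refl Mb])
  also have "\<dots> = 2/3 * measure_pmf.expectation ?p (td_f phi r gam traj N)" by simp
  also have "\<dots> \<le> 2/3 * ((2/3) ^ m * td_f phi r gam traj N theta0)"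
    using Suc.IH by simp
  finally show ?case by simp
qed

end

theorem theorem1:
  fixes phi :: "'s::finite \<Rightarrow> real^'d" and r :: "'s \<Rightarrow> 's \<Rightarrow> real"
    and gam :: real and traj :: "nat \<Rightarrow> 's" and N M :: nat and theta0 :: "real^'d"
  assumes "\<And>s. norm (phi s) \<le> 1"
    and "0 \<le> gam" and "gam < 1"
    and "N \<ge> 1"
    and "invertible (td_A phi gam traj N)"
    and "td_lambdaA phi gam traj N > 0"
    and "M \<ge> 1"
    and "real M \<ge> 2 / (td_lambdaA phi gam traj N *
            (1 / (8 + 4 * gam\<^sup>2 / (real N * td_lambdaA phi gam traj N))))"
  shows "\<forall>m. measure_pmf.expectation
              (td_svrg phi r gam traj N (1 / (8 + 4 * gam\<^sup>2 / (real N * td_lambdaA phi gam traj N))) M theta0 m)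
              (td_f phi r gam traj N)
           \<le> (2/3) ^ m * td_f phi r gam traj N theta0"
proof -
  interpret td_setting phi r gam traj N
    by unfold_locales (use assms in auto)
  show ?thesis
    by (intro allI main[OF assms(6) assms(7) assms(8)])
qed

end
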